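(* Let $k\in\mathbb{N}$ and let $x_1,\ldots,x_k$ be positive reals with $x_1+\cdots+x_k<1$, $x_1\ge x_2\ge\cdots\ge x_k$, and $x_1\cdots x_j \le 1 - \sum_{i=1}^j x_i$ for all $j\in\{1,\ldots,k\}$. Then \[ x_1+\cdots+x_k \le \frac1{s_1}+\cdots+\frac1{s_k}, \] with equality if and only if $x_i = 1/s_i$ for all $i\in\{1,\ldots,k\}$.
   Context: The Sylvester sequence: $s_1 = 2$, $s_i = \prod_{j=1}^{i-1} s_j + 1$ for $i\ge2$. *)

theory Defs
  imports Complex_Main
begin

text \<open>Sylvester sequence, 1-indexed: s 1 = 2, s i = (prod_{j=1}^{i-1} s j) + 1 for i >= 2.
  The value at 0 is an irrelevant convention (we set it to 1).\<close>
fun sylvester :: "nat \<Rightarrow> nat" where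
  "sylvester 0 = 1"
| "sylvester (Suc 0) = 2"
| "sylvester (Suc (Suc n)) = (\<Prod>j=1..Suc n. sylvester j) + 1"

end

theory Submission
  imports Defs
begin

lemma syl_succ: "sylvester (Suc j) = (\<Prod>i=1..j. sylvester i) + 1"
  by (cases j) auto

lemma syl_pos: "sylvester i \<ge> 1"
  by (cases i) (auto simp: syl_succ)

lemma syl_rem: "1 - (\<Sum>i=1..j. 1 / real (sylvester i)) = (\<Prod>i=1..j. 1 / real (sylvester i))"
proof (induction j)
  case 0
  then show ?case by simp
next
  case (Suc j)
  define p where "p = real (\<Prod>i=1..j. sylvester i)"
  have pp: "p \<ge> 1" unfolding p_def using syl_pos
    by (metis of_nat_1 of_nat_le_iff prod_ge_1)
  have pr: "(\<Prod>i=1..j. 1 / real (sylvester i)) = 1 / p"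
    unfolding p_def by (simp add: prod_dividef)
  have ss: "real (sylvester (Suc j)) = p + 1" unfolding p_def by (simp add: syl_succ)
  have "1 - (\<Sum>i=1..Suc j. 1 / real (sylvester i))
      = (1 - (\<Sum>i=1..j. 1 / real (sylvester i))) - 1 / real (sylvester (Suc j))" by simp
  also have "\<dots> = 1/p - 1/(p+1)" using Suc pr ss by simp
  also have "\<dots> = 1/p * (1/(p+1))" using pp by (simp add: field_simps)
  also have "\<dots> = (\<Prod>i=1..Suc j. 1 / real (sylvester i))" using pr ss by simp
  finally show ?case .
qed

lemma abel:
  fixes d c :: "nat \<Rightarrow> real"
  assumes mono: "\<And>l. 1 \<le> l \<Longrightarrow> l < n \<Longrightarrow> c l \<le> c (Suc l)"
    and c1: "c 1 \<ge> 0"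
    and D: "\<And>i. 1 \<le> i \<Longrightarrow> i \<le> n \<Longrightarrow> (\<Sum>l=i..n. d l) \<ge> 0"
  shows "(\<Sum>l=1..n. d l * c l) \<ge> 0"
proof -
  have D': "\<And>i. 1 \<le> i \<Longrightarrow> (\<Sum>l=i..n. d l) \<ge> 0"
    using D by (metis atLeastatMost_empty' not_le sum.empty order_refl)
  have G: "(\<Sum>l=i..n. d l * c l) \<ge> c i * (\<Sum>l=i..n. d l)" if "1 \<le> i" "i \<le> n+1" for i
    using that(2,1)
  proof (induction i rule: inc_induct)
    case base
    then show ?case by simp
  next
    case (step m)
    have mn: "m \<le> n" using step by simp
    have e1: "(\<Sum>l=m..n. d l * c l) = d m * c m + (\<Sum>l=Suc m..n. d l * c l)"
      using mn by (simp add: sum.atLeast_Suc_atMost)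
    have e2: "(\<Sum>l=m..n. d l) = d m + (\<Sum>l=Suc m..n. d l)"
      using mn by (simp add: sum.atLeast_Suc_atMost)
    have ih: "(\<Sum>l=Suc m..n. d l * c l) \<ge> c (Suc m) * (\<Sum>l=Suc m..n. d l)"
      using step by simp
    have Dn: "(\<Sum>l=Suc m..n. d l) \<ge> 0" using D' by simp
    have "c (Suc m) * (\<Sum>l=Suc m..n. d l) \<ge> c m * (\<Sum>l=Suc m..n. d l)"
    proof (cases "m < n")
      case True
      then show ?thesis using mono[of m] step Dn by (simp add: mult_right_mono)
    next
      case False
      then show ?thesis using mn by simp
    qed
    then show ?case using e1 e2 ih by (simp add: algebra_simps)
  qed
  have "c 1 * (\<Sum>l=1..n. d l) \<ge> 0" using c1 D' by simp
  then show ?thesis using G[of 1] by simp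
qed

lemma split_sum:
  fixes f :: "nat \<Rightarrow> real"
  assumes "1 \<le> i" "i \<le> Suc j"
  shows "(\<Sum>l=i..j. f l) = (\<Sum>l=1..j. f l) - (\<Sum>l=1..i-1. f l)"
proof -
  have a: "{i..j} = {i..<Suc j}" "{1..j} = {1..<Suc j}" "{1..i-1} = {1..<i}"
    using assms by auto
  show ?thesis unfolding a using sum.atLeastLessThan_concat[of 1 i "Suc j" f] assms by simp
qed

theorem mainTheorem14:
  fixes k :: nat and x :: "nat \<Rightarrow> real"
  assumes pos: "\<And>i. i \<in> {1..k} \<Longrightarrow> x i > 0"
    and sumlt: "(\<Sum>i=1..k. x i) < 1"
    and noninc: "\<And>i. 1 \<le> i \<Longrightarrow> i < k \<Longrightarrow> x (Suc i) \<le> x i"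
    and prodle: "\<And>j. j \<in> {1..k} \<Longrightarrow> (\<Prod>i=1..j. x i) \<le> 1 - (\<Sum>i=1..j. x i)"
  shows "(\<Sum>i=1..k. x i) \<le> (\<Sum>i=1..k. 1 / real (sylvester i))
       \<and> ((\<Sum>i=1..k. x i) = (\<Sum>i=1..k. 1 / real (sylvester i))
           \<longleftrightarrow> (\<forall>i\<in>{1..k}. x i = 1 / real (sylvester i)))"
proof -
  define y where "y i = 1 / real (sylvester i)" for i
  have ypos: "y i > 0" for i unfolding y_def using syl_pos[of i] by simp
  have claim: "j \<le> k \<Longrightarrow> (\<Sum>i=1..j. x i) \<ge> (\<Sum>i=1..j. y i) \<Longrightarrow> \<forall>i\<in>{1..j}. x i = y i" for j
  proof (induction j rule: less_induct)
    case (less j)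
    show ?case
    proof (cases "j = 0")
      case True
      then show ?thesis by simp
    next
      case False
      have prior: "(\<Sum>l=1..i. x l) \<le> (\<Sum>l=1..i. y l)" if "i < j" for i
      proof (rule ccontr)
        assume nt: "\<not> ?thesis"
        then have "\<forall>l\<in>{1..i}. x l = y l" using less.IH[of i] that less.prems by simp
        then have "(\<Sum>l=1..i. x l) = (\<Sum>l=1..i. y l)" using sum.cong[of "{1..i}" "{1..i}" x y] by blast
        then show False using nt by simp
      qed
      have xpos: "x l > 0" if "l \<in> {1..j}" for l using pos that less.prems by auto
      have Dnn: "(\<Sum>l=i..j. x l - y l) \<ge> 0" if "1 \<le> i" "i \<le> j" for i
      proof -
        have "(\<Sum>l=i..j. x l - y l) = (\<Sum>l=1..j. x l - y l) - (\<Sum>l=1..i-1. x l - y l)"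
          using split_sum[of i j "\<lambda>l. x l - y l"] that by linarith
        also have "\<dots> = ((\<Sum>l=1..j. x l) - (\<Sum>l=1..j. y l)) - ((\<Sum>l=1..i-1. x l) - (\<Sum>l=1..i-1. y l))"
          by (simp add: sum_subtractf)
        moreover have "i - 1 < j" using that by simp
        ultimately show ?thesis using prior[of "i-1"] less.prems(2) by linarith
      qed
      have A: "(\<Sum>l=1..j. (x l - y l) * (1 / x l)) \<ge> 0"
      proof (rule abel)
        fix l assume "1 \<le> l" "l < j"
        then have "x (Suc l) \<le> x l" "x (Suc l) > 0" using noninc less.prems xpos by auto
        then show "1 / x l \<le> 1 / x (Suc l)" by (simp add: frac_le)
      next
        show "0 \<le> 1 / x 1" using xpos[of 1] False by simp
      next
        fix i assume "1 \<le> i" "i \<le> j" then show "0 \<le> (\<Sum>l=i..j. x l - y l)" using Dnn by simp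
      qed
      have PQ: "(\<Prod>l=1..j. x l) \<le> (\<Prod>l=1..j. y l)"
      proof -
        have "(\<Prod>l=1..j. x l) \<le> 1 - (\<Sum>l=1..j. x l)" using prodle[of j] less.prems False by simp
        also have "\<dots> \<le> 1 - (\<Sum>l=1..j. y l)" using less.prems by simp
        also have "\<dots> = (\<Prod>l=1..j. y l)" unfolding y_def by (rule syl_rem)
        finally show ?thesis .
      qed
      have Ppos: "(\<Prod>l=1..j. x l) > 0" by (rule prod_pos) (use xpos in auto)
      have lnle: "(\<Sum>l=1..j. ln (x l)) - (\<Sum>l=1..j. ln (y l)) \<le> 0"
      proof -
        have "ln (\<Prod>l=1..j. x l) \<le> ln (\<Prod>l=1..j. y l)" using PQ Ppos by simp
        moreover have "ln (\<Prod>l=1..j. x l) = (\<Sum>l=1..j. ln (x l))"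
          by (rule ln_prod) (use xpos in fastforce)+
        moreover have "ln (\<Prod>l=1..j. y l) = (\<Sum>l=1..j. ln (y l))"
          using ypos by (subst ln_prod) (auto simp: less_le)
        ultimately show ?thesis by simp
      qed
      define e where "e l = ln (x l) - ln (y l) - (x l - y l) * (1 / x l)" for l
      have enn: "e l \<ge> 0" if "l \<in> {1..j}" for l
      proof -
        have "ln (y l / x l) \<le> y l / x l - 1" using ln_le_minus_one ypos xpos[OF that] by simp
        moreover have "(x l - y l) * (1 / x l) = 1 - y l / x l" using xpos[OF that] by (simp add: field_simps)
        moreover have "ln (y l / x l) = ln (y l) - ln (x l)" using ln_div ypos[of l] xpos[OF that] by simp
        ultimately show ?thesis unfolding e_def by linarith
      qed
      have "(\<Sum>l=1..j. e l) = ((\<Sum>l=1..j. ln (x l)) - (\<Sum>l=1..j. ln (y l)))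
          - (\<Sum>l=1..j. (x l - y l) * (1 / x l))"
        unfolding e_def by (simp add: sum_subtractf)
      then have "(\<Sum>l=1..j. e l) \<le> 0" using lnle A by simp
      then have "(\<Sum>l=1..j. e l) = 0" using enn by (meson antisym sum_nonneg)
      then have e0: "\<forall>l\<in>{1..j}. e l = 0" using enn by (subst (asm) sum_nonneg_eq_0_iff) auto
      show ?thesis
      proof
        fix l assume l: "l \<in> {1..j}"
        have "(x l - y l) * (1 / x l) = 1 - y l / x l" using xpos[OF l] by (simp add: field_simps)
        moreover have "ln (y l / x l) = ln (y l) - ln (x l)" using ln_div ypos[of l] xpos[OF l] by simp
        moreover have "e l = 0" using e0 l by blast
        ultimately have "ln (y l / x l) = y l / x l - 1" unfolding e_def by linarith
        then have "y l / x l = 1" using ln_eq_minus_one[of "y l / x l"] ypos[of l] xpos[OF l] by simp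
        then show "x l = y l" using xpos[OF l] by simp
      qed
    qed
  qed
  have le: "(\<Sum>i=1..k. x i) \<le> (\<Sum>i=1..k. y i)"
  proof (rule ccontr)
    assume nt: "\<not> ?thesis"
    then have "\<forall>l\<in>{1..k}. x l = y l" using claim[of k] by simp
    then have "(\<Sum>l=1..k. x l) = (\<Sum>l=1..k. y l)" using sum.cong[of "{1..k}" "{1..k}" x y] by blast
    then show False using nt by simp
  qed
  have eq: "(\<Sum>i=1..k. x i) = (\<Sum>i=1..k. y i) \<longleftrightarrow> (\<forall>i\<in>{1..k}. x i = y i)"
  proof
    assume "(\<Sum>i=1..k. x i) = (\<Sum>i=1..k. y i)"
    then show "\<forall>i\<in>{1..k}. x i = y i" using claim[of k] by simp
  next
    assume "\<forall>i\<in>{1..k}. x i = y i"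
    then show "(\<Sum>i=1..k. x i) = (\<Sum>i=1..k. y i)" using sum.cong[of "{1..k}" "{1..k}" x y] by blast
  qed
  show ?thesis using le eq unfolding y_def by simp
qed

end
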